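(* Let $f:\mathbb{R}^N\to[0,\infty)$ be symmetrizable, $f(x)=\phi(h(x'),x_N)$, let $K$ be the Wulff shape of $f$ and $K_h\subset\mathbb{R}^{N-1}$ the Wulff shape of $h$. Then there exists $\alpha:\mathbb{R}\to[0,\infty)$, concave on $\{t:\alpha(t)>0\}$, such that (i) $K_t=\emptyset$ for every $t$ with $\alpha(t)=0$, and (ii) $K_t=\alpha(t)K_h$ for every $t$ with $\alpha(t)\neq 0$. Conversely, let $f:\mathbb{R}^N\to[0,\infty)$ be lower-semicontinuous, convex, positively $1$-homogeneous with $f(x)>0$ for $x\neq 0$, and suppose there exist an open convex set $K_h\subset\mathbb{R}^{N-1}$ and a function $\alpha:\mathbb{R}\to[0,\infty)$, concave on $\{t:\alpha(t)>0\}$, such that the Wulff shape $K$ of $f$ satisfies (i) and (ii). Then $f$ is symmetrizable.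
   Context: Let $N\ge 2$ and write $x=(x',x_N)\in\mathbb{R}^{N-1}\times\mathbb{R}$. For $E\subset\mathbb{R}^N$ and $t\in\mathbb{R}$, $E_t:=\{x'\in\mathbb{R}^{N-1}:(x',t)\in E\}$. For a convex, positively $1$-homogeneous $g:\mathbb{R}^k\to[0,\infty)$ with $g(y)>0$ for $y\neq0$, its Wulff shape is $K_g:=\bigcap_{\nu\in S^{k-1}}\{y\in\mathbb{R}^k:y\cdot\nu<g(\nu)\}$. A convex, positively $1$-homogeneous $f:\mathbb{R}^N\to[0,\infty)$ with $f(x)>0$ for $x\ne0$ is called symmetrizable if there exist lower-semicontinuous functions $h:\mathbb{R}^{N-1}\to[0,\infty)$ and $\phi:[0,\infty)\times\mathbb{R}\to[0,\infty)$ such that $h$ is positively $1$-homogeneous, convex, with $h(x')>0$ for $x'\neq0$, $\phi$ is convex, and $f(x)=\phi(h(x'),x_N)$ for all $x\in\mathbb{R}^N$. *)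

theory Defs
  imports "HOL-Analysis.Analysis"
begin

text \<open>Points of R^N are pairs (x', x_N) with x' in the euclidean space 'a = R^(N-1).\<close>

definition lsc_on :: "'a::topological_space set \<Rightarrow> ('a \<Rightarrow> real) \<Rightarrow> bool" where
  "lsc_on S g \<longleftrightarrow> (\<forall>x\<in>S. \<forall>c. c < g x \<longrightarrow> (\<forall>\<^sub>F y in at x within S. c < g y))"

definition pos_hom1 :: "('a::real_vector \<Rightarrow> real) \<Rightarrow> bool" where
  "pos_hom1 g \<longleftrightarrow> (\<forall>t>0. \<forall>y. g (t *\<^sub>R y) = t * g y)"

definition admissible :: "('a::real_vector \<Rightarrow> real) \<Rightarrow> bool" where
  "admissible g \<longleftrightarrow> convex_on UNIV g \<and> pos_hom1 g \<and> (\<forall>y. 0 \<le> g y) \<and> (\<forall>y. y \<noteq> 0 \<longrightarrow> 0 < g y)"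

definition wulff :: "('a::real_inner \<Rightarrow> real) \<Rightarrow> 'a set" where
  "wulff g = (\<Inter>\<nu>\<in>{\<nu>. norm \<nu> = 1}. {y. inner y \<nu> < g \<nu>})"

definition slice :: "('a \<times> real) set \<Rightarrow> real \<Rightarrow> 'a set" where
  "slice E t = {x'. (x', t) \<in> E}"

definition sym_repr :: "('a::euclidean_space \<times> real \<Rightarrow> real) \<Rightarrow> ('a \<Rightarrow> real) \<Rightarrow> (real \<times> real \<Rightarrow> real) \<Rightarrow> bool" where
  "sym_repr f h \<phi> \<longleftrightarrow>
     lsc_on UNIV h \<and> admissible h \<and>
     lsc_on ({0..} \<times> UNIV) \<phi> \<and> (\<forall>p\<in>{0..} \<times> UNIV. 0 \<le> \<phi> p) \<and> convex_on ({0..} \<times> UNIV) \<phi> \<and>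
     (\<forall>x' xN. f (x', xN) = \<phi> (h x', xN))"

definition symmetrizable :: "('a::euclidean_space \<times> real \<Rightarrow> real) \<Rightarrow> bool" where
  "symmetrizable f \<longleftrightarrow> admissible f \<and> (\<exists>h \<phi>. sym_repr f h \<phi>)"

end

theory Submission
  imports Defs
begin

lemma adm_hom: "admissible g \<Longrightarrow> t > 0 \<Longrightarrow> g (t *\<^sub>R y) = t * g y"
  by (auto simp: admissible_def pos_hom1_def)

lemma adm_zero: assumes "admissible g" shows "g 0 = 0"
proof -
  have "g 0 = 2 * g 0" using adm_hom[OF assms, of 2 0] by simp
  thus ?thesis by linarith
qed

lemma adm_hom0: "admissible g \<Longrightarrow> t \<ge> 0 \<Longrightarrow> g (t *\<^sub>R y) = t * g y"
  by (cases "t = 0") (auto simp: adm_zero adm_hom)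

lemma adm_nonneg: "admissible g \<Longrightarrow> 0 \<le> g y"
  by (auto simp: admissible_def)

lemma adm_pos: "admissible g \<Longrightarrow> y \<noteq> 0 \<Longrightarrow> 0 < g y"
  by (auto simp: admissible_def)

lemma adm_convex: "admissible g \<Longrightarrow> convex_on UNIV g"
  by (auto simp: admissible_def)

lemma adm_cont:
  fixes g :: "'b::euclidean_space \<Rightarrow> real"
  assumes "admissible g" shows "continuous_on UNIV g"
  using convex_on_continuous[of UNIV g] assms by (auto simp: admissible_def)

lemma adm_unit:
  fixes g :: "'b::euclidean_space \<Rightarrow> real"
  assumes "admissible g" "y \<noteq> 0"
  shows "g y = norm y * g (y /\<^sub>R norm y)"
proof -
  have "y = norm y *\<^sub>R (y /\<^sub>R norm y)" using assms(2) by simp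
  hence "g y = g (norm y *\<^sub>R (y /\<^sub>R norm y))" by simp
  also have "\<dots> = norm y * g (y /\<^sub>R norm y)" using adm_hom[OF assms(1)] assms(2) by simp
  finally show ?thesis .
qed

lemma adm_lower:
  fixes g :: "'b::euclidean_space \<Rightarrow> real"
  assumes "admissible g"
  obtains m where "m > 0" "\<And>y. m * norm y \<le> g y"
proof -
  obtain x where x: "x \<in> sphere 0 1" "\<And>y. y \<in> sphere 0 1 \<Longrightarrow> g x \<le> g y"
    using continuous_attains_inf[of "sphere (0::'b) 1" g] continuous_on_subset[OF adm_cont[OF assms]]
    by force
  have "x \<noteq> 0" using x(1) by auto
  hence m: "g x > 0" using adm_pos[OF assms] by blast
  have "g x * norm y \<le> g y" for y
  proof (cases "y = 0")
    case True thus ?thesis using adm_zero[OF assms] by simp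
  next
    case False
    have "g x \<le> g (y /\<^sub>R norm y)" using x(2)[of "y /\<^sub>R norm y"] False by simp
    hence "g x * norm y \<le> norm y * g (y /\<^sub>R norm y)" by (simp add: mult.commute mult_left_mono)
    thus ?thesis using adm_unit[OF assms False] by simp
  qed
  thus ?thesis using that m by blast
qed

lemma adm_upper:
  fixes g :: "'b::euclidean_space \<Rightarrow> real"
  assumes "admissible g"
  obtains M where "M > 0" "\<And>y. g y \<le> M * norm y"
proof -
  obtain x where x: "x \<in> sphere 0 1" "\<And>y. y \<in> sphere 0 1 \<Longrightarrow> g y \<le> g x"
    using continuous_attains_sup[of "sphere (0::'b) 1" g] continuous_on_subset[OF adm_cont[OF assms]]
    by force
  have "x \<noteq> 0" using x(1) by auto
  hence m: "g x > 0" using adm_pos[OF assms] by blast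
  have "g y \<le> g x * norm y" for y
  proof (cases "y = 0")
    case True thus ?thesis using adm_zero[OF assms] by simp
  next
    case False
    have "g (y /\<^sub>R norm y) \<le> g x" using x(2)[of "y /\<^sub>R norm y"] False by simp
    hence "norm y * g (y /\<^sub>R norm y) \<le> g x * norm y" by (simp add: mult.commute mult_left_mono)
    thus ?thesis using adm_unit[OF assms False] by simp
  qed
  thus ?thesis using that m by blast
qed

lemma wulff_iff:
  fixes g :: "'b::euclidean_space \<Rightarrow> real"
  assumes "admissible g"
  shows "y \<in> wulff g \<longleftrightarrow> (\<forall>w. w \<noteq> 0 \<longrightarrow> inner y w < g w)"
proof
  assume "\<forall>w. w \<noteq> 0 \<longrightarrow> inner y w < g w"
  thus "y \<in> wulff g" unfolding wulff_def by (auto simp del: norm_eq_zero) (metis norm_zero zero_neq_one)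
next
  assume y: "y \<in> wulff g"
  show "\<forall>w. w \<noteq> 0 \<longrightarrow> inner y w < g w"
  proof (intro allI impI)
    fix w :: 'b assume w: "w \<noteq> 0"
    have "norm (w /\<^sub>R norm w) = 1" using w by simp
    hence "inner y (w /\<^sub>R norm w) < g (w /\<^sub>R norm w)"
      using y unfolding wulff_def by blast
    hence "norm w * inner y (w /\<^sub>R norm w) < norm w * g (w /\<^sub>R norm w)"
      using w by simp
    moreover have "norm w * inner y (w /\<^sub>R norm w) = inner y w" using w by simp
    ultimately show "inner y w < g w" using adm_unit[OF assms w] by linarith
  qed
qed

lemma wulff_le:
  fixes g :: "'b::euclidean_space \<Rightarrow> real"
  assumes "admissible g" "y \<in> wulff g"
  shows "inner y w \<le> g w"
  using wulff_iff[OF assms(1)] assms(2) adm_zero[OF assms(1)]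
  by (cases "w = 0") (auto intro: less_imp_le)

lemma wulff_zero:
  fixes g :: "'b::euclidean_space \<Rightarrow> real"
  assumes "admissible g" shows "0 \<in> wulff g"
  using wulff_iff[OF assms] adm_pos[OF assms] by simp

lemma wulff_bounded:
  fixes g :: "'b::euclidean_space \<Rightarrow> real"
  assumes "admissible g"
  obtains M where "M > 0" "\<And>y. y \<in> wulff g \<Longrightarrow> norm y \<le> M"
proof -
  obtain M where M: "M > 0" "\<And>y. g y \<le> M * norm y" using adm_upper[OF assms] by blast
  have "norm y \<le> M" if "y \<in> wulff g" for y
  proof (cases "y = 0")
    case True thus ?thesis using M by simp
  next
    case False
    have "inner y y < g y" using wulff_iff[OF assms] that False by blast
    also have "\<dots> \<le> M * norm y" using M by blast
    finally have "norm y * norm y < M * norm y" by (simp add: power2_norm_eq_inner[symmetric] power2_eq_square)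
    thus ?thesis using False by simp
  qed
  thus ?thesis using that M by blast
qed

lemma wulff_convex:
  fixes g :: "'b::euclidean_space \<Rightarrow> real"
  assumes "admissible g" shows "convex (wulff g)"
  unfolding wulff_def
  by (rule convex_INT) (auto intro: convex_halfspace_lt[of _ _, simplified inner_commute])

lemma wulff_open:
  fixes g :: "'b::euclidean_space \<Rightarrow> real"
  assumes "admissible g" shows "open (wulff g)"
proof (rule openI)
  fix y assume y: "y \<in> wulff g"
  have c: "continuous_on (sphere 0 1) (\<lambda>\<nu>. g \<nu> - inner y \<nu>)"
    by (intro continuous_intros continuous_on_subset[OF adm_cont[OF assms]]) auto
  obtain x where x: "x \<in> sphere 0 1" "\<And>\<nu>. \<nu> \<in> sphere 0 1 \<Longrightarrow> g x - inner y x \<le> g \<nu> - inner y \<nu>"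
    using continuous_attains_inf[OF _ _ c] by force
  have d: "g x - inner y x > 0" using y x(1) unfolding wulff_def by auto
  have "ball y (g x - inner y x) \<subseteq> wulff g"
  proof
    fix z assume z: "z \<in> ball y (g x - inner y x)"
    have "inner z \<nu> < g \<nu>" if "norm \<nu> = 1" for \<nu>
    proof -
      have "inner (z - y) \<nu> \<le> norm (z - y) * norm \<nu>" by (rule norm_cauchy_schwarz)
      also have "\<dots> = dist y z" using that by (simp add: dist_norm norm_minus_commute)
      also have "\<dots> < g x - inner y x" using z by simp
      also have "\<dots> \<le> g \<nu> - inner y \<nu>" using x(2)[of \<nu>] that by simp
      finally show ?thesis by (simp add: inner_diff_left)
    qed
    thus "z \<in> wulff g" unfolding wulff_def by auto
  qed
  thus "\<exists>e>0. ball y e \<subseteq> wulff g" using d by blast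
qed


lemma wulff_sup:
  fixes g :: "'b::euclidean_space \<Rightarrow> real"
  assumes g: "admissible g" and e: "\<epsilon> > 0"
  shows "\<exists>y\<in>wulff g. inner y w > g w - \<epsilon>"
proof (cases "w = 0")
  case True thus ?thesis using wulff_zero[OF g] adm_zero[OF g] e by auto
next
  case False
  have gw: "g w > 0" using adm_pos[OF g False] .
  define w0 where "w0 = w /\<^sub>R g w"
  have gw0: "g w0 = 1" using adm_hom[OF g, of "inverse (g w)" w] gw by (simp add: w0_def)
  define C where "C = {v. g v < 1}"
  have cC: "convex C" unfolding C_def convex_def
    using convex_lower[OF adm_convex[OF g]] by (smt (verit, best) UNIV_I mem_Collect_eq)
  have C0: "0 \<in> C" using adm_zero[OF g] by (simp add: C_def)
  have w0C: "w0 \<notin> C" using gw0 by (simp add: C_def)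
  obtain a b where ab: "a \<noteq> 0" "\<forall>x\<in>C. inner a x \<le> b" "\<forall>x\<in>{w0}. inner a x \<ge> b"
    using separating_hyperplane_sets[OF cC convex_singleton, of w0] C0 w0C by blast
  define s where "s = 1 / (g a + 1)"
  have ga: "g a > 0" using adm_pos[OF g ab(1)] .
  have s: "s > 0" using ga by (simp add: s_def)
  have "g (s *\<^sub>R a) = g a / (g a + 1)" using adm_hom[OF g s] by (simp add: s_def)
  also have "\<dots> < 1" using ga by simp
  finally have "s *\<^sub>R a \<in> C" by (simp add: C_def)
  hence "inner a (s *\<^sub>R a) \<le> b" using ab(2) by blast
  hence "s * inner a a \<le> b" by simp
  moreover have "inner a a > 0" using ab(1) by simp
  ultimately have b: "b > 0" using s by (smt (verit) mult_pos_pos)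
  define p where "p = a /\<^sub>R b"
  have pv: "inner p v \<le> g v" for v
  proof (rule dense_le)
    fix s assume sv: "s < inner p v"
    show "s \<le> g v"
    proof (rule ccontr)
      assume "\<not> s \<le> g v"
      hence s1: "g v < s" by simp
      have s0: "s > 0" using s1 adm_nonneg[OF g, of v] by linarith
      have "g (inverse s *\<^sub>R v) = g v / s" using adm_hom[OF g, of "inverse s" v] s0
        by (simp add: divide_inverse mult.commute)
      also have "\<dots> < 1" using s1 s0 by simp
      finally have "inverse s *\<^sub>R v \<in> C" by (simp add: C_def)
      hence "inner a (inverse s *\<^sub>R v) \<le> b" using ab(2) by blast
      hence "inverse s * inner a v \<le> b" by simp
      hence "inner a v \<le> s * b" using s0 by (simp add: field_simps)
      hence "inner p v \<le> s" using b by (simp add: p_def field_simps)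
      thus False using sv by simp
    qed
  qed
  have pw: "inner p w \<ge> g w"
  proof -
    have "inner a w0 \<ge> b" using ab(3) by simp
    hence "inner a w / g w \<ge> b" by (simp add: w0_def divide_inverse mult.commute)
    hence "inner a w \<ge> b * g w" using gw by (simp add: field_simps)
    thus ?thesis using b by (simp add: p_def field_simps)
  qed
  define l where "l = max 0 (1 - \<epsilon> / (2 * g w))"
  have l0: "l \<ge> 0" and l1: "l < 1" using e gw by (auto simp: l_def)
  have lw: "l * g w \<ge> g w - \<epsilon> / 2"
  proof -
    have "(1 - \<epsilon> / (2 * g w)) * g w = g w - \<epsilon> / 2" using gw by (simp add: field_simps)
    thus ?thesis unfolding l_def using gw
      by (smt (verit, best) e mult_nonneg_nonneg mult_right_mono max.cobounded2)
  qed
  have "l *\<^sub>R p \<in> wulff g"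
  proof (subst wulff_iff[OF g], intro allI impI)
    fix v :: 'b assume v: "v \<noteq> 0"
    have "inner (l *\<^sub>R p) v = l * inner p v" by simp
    also have "\<dots> \<le> l * g v" using pv l0 by (simp add: mult_left_mono)
    also have "\<dots> < g v" using adm_pos[OF g v] l1 by simp
    finally show "inner (l *\<^sub>R p) v < g v" .
  qed
  moreover have "inner (l *\<^sub>R p) w > g w - \<epsilon>"
  proof -
    have "inner (l *\<^sub>R p) w = l * inner p w" by simp
    also have "\<dots> \<ge> l * g w" using pw l0 by (simp add: mult_left_mono)
    finally show ?thesis using lw e by linarith
  qed
  ultimately show ?thesis by blast
qed

lemma cont_lsc:
  assumes "continuous_on S F" shows "lsc_on S F"
  unfolding lsc_on_def
proof (intro ballI allI impI)
  fix x c assume "x \<in> S" "c < F x"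
  moreover have "(F \<longlongrightarrow> F x) (at x within S)"
    using assms \<open>x \<in> S\<close> continuous_on_def by blast
  ultimately show "\<forall>\<^sub>F y in at x within S. c < F y"
    using order_tendstoD(1) by blast
qed


lemma part2:
  fixes f :: "'a::euclidean_space \<times> real \<Rightarrow> real" and Kh :: "'a set" and \<alpha> :: "real \<Rightarrow> real"
  assumes f: "admissible f" and Kh: "open Kh" "convex Kh"
    and a0: "\<forall>t. 0 \<le> \<alpha> t"
    and s0: "\<forall>t. \<alpha> t = 0 \<longrightarrow> slice (wulff f) t = {}"
    and s1: "\<forall>t. \<alpha> t \<noteq> 0 \<longrightarrow> slice (wulff f) t = (\<lambda>y. \<alpha> t *\<^sub>R y) ` Kh"
  shows "symmetrizable f"
proof -
  define K where "K = wulff f"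
  have K0: "(0, 0) \<in> K" using wulff_zero[OF f] by (simp add: K_def zero_prod_def)
  hence "0 \<in> slice K 0" by (simp add: slice_def)
  hence al0: "\<alpha> 0 \<noteq> 0" using s0 K_def by auto
  hence al0p: "\<alpha> 0 > 0" using a0 by (simp add: order_le_neq_trans)
  have sl0: "slice K 0 = (\<lambda>y. \<alpha> 0 *\<^sub>R y) ` Kh" using s1 al0 K_def by auto
  have Kh0: "0 \<in> Kh" using \<open>0 \<in> slice K 0\<close> sl0 al0 by auto
  obtain B where B: "B > 0" "\<And>y. y \<in> K \<Longrightarrow> norm y \<le> B"
    using wulff_bounded[OF f] K_def by blast
  define Bk where "Bk = B / \<alpha> 0"
  have Khb: "norm k \<le> Bk" if "k \<in> Kh" for k
  proof -
    have "\<alpha> 0 *\<^sub>R k \<in> slice K 0" using sl0 that by blast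
    hence "(\<alpha> 0 *\<^sub>R k, 0) \<in> K" by (simp add: slice_def)
    hence "norm (\<alpha> 0 *\<^sub>R k, 0::real) \<le> B" using B by blast
    hence "\<alpha> 0 * norm k \<le> B" using al0p by (simp add: norm_Pair)
    thus ?thesis using al0p by (simp add: Bk_def field_simps)
  qed
  define g where "g x = (SUP k\<in>Kh. inner x k)" for x :: 'a
  have bdd: "bdd_above ((\<lambda>k. inner x k) ` Kh)" for x
  proof (rule bdd_aboveI2)
    fix k assume "k \<in> Kh"
    have "inner x k \<le> norm x * norm k" by (rule norm_cauchy_schwarz)
    also have "\<dots> \<le> norm x * Bk" using Khb[OF \<open>k \<in> Kh\<close>] by (simp add: mult_left_mono)
    finally show "inner x k \<le> norm x * Bk" .
  qed
  have Khne: "Kh \<noteq> {}" using Kh0 by blast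
  have gup: "inner x k \<le> g x" if "k \<in> Kh" for x k
    unfolding g_def using cSUP_upper[OF that bdd] .
  have gless: "\<exists>k\<in>Kh. c < inner x k" if "c < g x" for x c
    using that less_cSUP_iff[OF Khne bdd] unfolding g_def by blast
  have gle: "g x \<le> c" if "\<And>k. k \<in> Kh \<Longrightarrow> inner x k \<le> c" for x c
    unfolding g_def using cSUP_least[OF Khne] that by blast
  have gadm: "admissible g"
    unfolding admissible_def pos_hom1_def
  proof (intro conjI allI impI)
    show "convex_on UNIV g"
      unfolding convex_on_def
    proof (intro conjI ballI allI impI)
      fix x y :: 'a and u v :: real assume uv: "0 \<le> u" "0 \<le> v" "u + v = 1"
      show "g (u *\<^sub>R x + v *\<^sub>R y) \<le> u * g x + v * g y"
      proof (rule gle)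
        fix k assume k: "k \<in> Kh"
        have "inner (u *\<^sub>R x + v *\<^sub>R y) k = u * inner x k + v * inner y k"
          by (simp add: inner_add_left)
        also have "\<dots> \<le> u * g x + v * g y"
          using gup[OF k, of x] gup[OF k, of y] uv by (simp add: add_mono mult_left_mono)
        finally show "inner (u *\<^sub>R x + v *\<^sub>R y) k \<le> u * g x + v * g y" .
      qed
    qed simp
  next
    fix t :: real and y :: 'a assume t: "t > 0"
    have "g (t *\<^sub>R y) \<le> t * g y"
    proof (rule gle)
      fix k assume k: "k \<in> Kh"
      show "inner (t *\<^sub>R y) k \<le> t * g y" using gup[OF k, of y] t by (simp add: mult_left_mono)
    qed
    moreover have "g y \<le> g (t *\<^sub>R y) / t"
    proof (rule gle)
      fix k assume k: "k \<in> Kh"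
      have "t * inner y k \<le> g (t *\<^sub>R y)" using gup[OF k, of "t *\<^sub>R y"] by simp
      thus "inner y k \<le> g (t *\<^sub>R y) / t" using t by (simp add: field_simps)
    qed
    ultimately show "g (t *\<^sub>R y) = t * g y" using t by (simp add: field_simps)
  next
    fix y show "0 \<le> g y" using gup[OF Kh0, of y] by simp
  next
    fix y :: 'a assume y: "y \<noteq> 0"
    obtain r where r: "r > 0" "ball 0 r \<subseteq> Kh" using Kh(1) Kh0 open_contains_ball by blast
    define k where "k = (r / 2 / norm y) *\<^sub>R y"
    have "norm k = r / 2" using y r by (simp add: k_def)
    hence "k \<in> Kh" using r by auto
    moreover have "inner y k = r / 2 * norm y" using y
      by (simp add: k_def power2_norm_eq_inner[symmetric] power2_eq_square)
    ultimately have "r / 2 * norm y \<le> g y" using gup by metis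
    moreover have "r / 2 * norm y > 0" using r y by simp
    ultimately show "0 < g y" by linarith
  qed
  have E: "f (x, r) \<le> f (y, r)" if gxy: "g x = g y" for x y r
  proof (rule ccontr)
    assume "\<not> f (x, r) \<le> f (y, r)"
    define \<epsilon> where "\<epsilon> = f (x, r) - f (y, r)"
    have e: "\<epsilon> > 0" using \<open>\<not> f (x, r) \<le> f (y, r)\<close> by (simp add: \<epsilon>_def)
    obtain zt where zt: "zt \<in> K" "inner zt (x, r) > f (x, r) - \<epsilon> / 2"
      using wulff_sup[OF f, of "\<epsilon> / 2" "(x, r)"] e K_def by auto
    obtain z t where ztd: "zt = (z, t)" by (cases zt)
    have zs: "z \<in> slice K t" using zt(1) ztd by (simp add: slice_def)
    hence at: "\<alpha> t \<noteq> 0" using s0 K_def by auto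
    hence atp: "\<alpha> t > 0" using a0 by (simp add: order_le_neq_trans)
    obtain k where k: "k \<in> Kh" "z = \<alpha> t *\<^sub>R k" using zs s1 at K_def by auto
    define \<eta> where "\<eta> = \<epsilon> / (2 * \<alpha> t)"
    have eta: "\<eta> > 0" using e atp by (simp add: \<eta>_def)
    obtain k' where k': "k' \<in> Kh" "g y - \<eta> < inner y k'" using gless[of "g y - \<eta>" y] eta by auto
    have "\<alpha> t *\<^sub>R k' \<in> slice K t" using s1 at K_def k'(1) by auto
    hence "(\<alpha> t *\<^sub>R k', t) \<in> K" by (simp add: slice_def)
    hence D1: "inner (\<alpha> t *\<^sub>R k', t) (y, r) \<le> f (y, r)" using wulff_le[OF f] K_def by blast
    have "f (x, r) - \<epsilon> / 2 < \<alpha> t * inner k x + t * r" using zt(2) ztd k(2) by simp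
    also have "\<dots> \<le> \<alpha> t * g y + t * r"
      using gup[OF k(1), of x] gxy atp by (simp add: inner_commute mult_left_mono)
    also have "\<dots> < \<alpha> t * (inner y k' + \<eta>) + t * r" using k'(2) atp by simp
    also have "\<dots> = \<alpha> t * inner y k' + t * r + \<epsilon> / 2" using atp
      by (simp add: \<eta>_def field_simps)
    also have "\<dots> \<le> f (y, r) + \<epsilon> / 2" using D1 by (simp add: inner_commute mult.commute)
    finally show False by (simp add: \<epsilon>_def field_simps)
  qed
  obtain e :: 'a where e: "e \<in> Basis" using nonempty_Basis by blast
  have e0: "e \<noteq> 0" using nonzero_Basis[OF e] .
  define u0 where "u0 = e /\<^sub>R g e"
  have ge: "g e > 0" using adm_pos[OF gadm e0] .
  have gu0: "g u0 = 1" using adm_hom[OF gadm, of "inverse (g e)" e] ge by (simp add: u0_def)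
  define \<phi> where "\<phi> p = f (fst p *\<^sub>R u0, snd p)" for p :: "real \<times> real"
  have fc: "continuous_on UNIV f" using adm_cont[OF f] .
  have \<phi>c: "continuous_on UNIV \<phi>"
    unfolding \<phi>_def
    by (rule continuous_on_compose2[OF fc]) (auto intro!: continuous_intros)
  have "sym_repr f g \<phi>"
    unfolding sym_repr_def
  proof (intro conjI ballI allI)
    show "lsc_on UNIV g" using cont_lsc[OF adm_cont[OF gadm]] .
    show "admissible g" using gadm .
    show "lsc_on ({0..} \<times> UNIV) \<phi>" using cont_lsc[OF continuous_on_subset[OF \<phi>c]] by blast
    fix p :: "real \<times> real"
    show "0 \<le> \<phi> p" using adm_nonneg[OF f] by (simp add: \<phi>_def)
  next
    show "convex_on ({0..} \<times> UNIV) \<phi>"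
      unfolding convex_on_def
    proof (intro conjI ballI allI impI)
      show "convex ({0::real..} \<times> (UNIV::real set))" by (intro convex_Times) auto
      fix p q :: "real \<times> real" and u v :: real assume uv: "0 \<le> u" "0 \<le> v" "u + v = 1"
      have eq: "(fst (u *\<^sub>R p + v *\<^sub>R q) *\<^sub>R u0, snd (u *\<^sub>R p + v *\<^sub>R q))
          = u *\<^sub>R (fst p *\<^sub>R u0, snd p) + v *\<^sub>R (fst q *\<^sub>R u0, snd q)"
        by (simp add: scaleR_add_left)
      show "\<phi> (u *\<^sub>R p + v *\<^sub>R q) \<le> u * \<phi> p + v * \<phi> q"
        unfolding \<phi>_def eq using adm_convex[OF f] uv unfolding convex_on_def by blast
    qed
  next
    fix x' :: 'a and xN :: real
    have "g (g x' *\<^sub>R u0) = g x'" using adm_hom0[OF gadm adm_nonneg[OF gadm], of x' u0] gu0 by simp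
    hence "f (x', xN) = f (g x' *\<^sub>R u0, xN)" using E by (metis order_antisym)
    thus "f (x', xN) = \<phi> (g x', xN)" by (simp add: \<phi>_def)
  qed
  thus ?thesis using f unfolding symmetrizable_def by blast
qed


lemma part1:
  fixes f :: "'a::euclidean_space \<times> real \<Rightarrow> real" and h :: "'a \<Rightarrow> real" and \<phi> :: "real \<times> real \<Rightarrow> real"
  assumes f: "admissible f" and sr: "sym_repr f h \<phi>"
  shows "\<exists>\<alpha> :: real \<Rightarrow> real. (\<forall>t. 0 \<le> \<alpha> t) \<and> concave_on {t. \<alpha> t > 0} \<alpha> \<and>
         (\<forall>t. \<alpha> t = 0 \<longrightarrow> slice (wulff f) t = {}) \<and>
         (\<forall>t. \<alpha> t \<noteq> 0 \<longrightarrow> slice (wulff f) t = (\<lambda>y. \<alpha> t *\<^sub>R y) ` wulff h)"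
proof -
  have h: "admissible h" and fe: "\<And>x' xN. f (x', xN) = \<phi> (h x', xN)"
    using sr unfolding sym_repr_def by auto
  define K where "K = wulff f"
  obtain m where m: "m > 0" "\<And>y. m * norm y \<le> h y" using adm_lower[OF h] by blast
  define U where "U = {u. h u = 1}"
  obtain e :: 'a where e: "e \<in> Basis" using nonempty_Basis by blast
  have e0: "e \<noteq> 0" using nonzero_Basis[OF e] .
  define u1 where "u1 = e /\<^sub>R h e"
  have he: "h e > 0" using adm_pos[OF h e0] .
  have u1U: "u1 \<in> U" using adm_hom[OF h, of "inverse (h e)" e] he by (simp add: u1_def U_def)
  have Une: "U \<noteq> {}" using u1U by blast
  have U0: "u \<noteq> 0" if "u \<in> U" for u using that adm_zero[OF h] by (auto simp: U_def)
  have bdd: "bdd_above ((\<lambda>u. inner x u) ` U)" for x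
  proof (rule bdd_aboveI2)
    fix u assume u: "u \<in> U"
    have "m * norm u \<le> 1" using m(2)[of u] u by (simp add: U_def)
    hence nu: "norm u \<le> 1 / m" using m(1) by (simp add: field_simps)
    have "inner x u \<le> norm x * norm u" by (rule norm_cauchy_schwarz)
    also have "\<dots> \<le> norm x * (1 / m)" using mult_left_mono[OF nu norm_ge_zero[of x]] by simp
    finally show "inner x u \<le> norm x * (1 / m)" .
  qed
  define D where "D x = (SUP u\<in>U. inner x u)" for x
  have Dup: "inner x u \<le> D x" if "u \<in> U" for x u
    unfolding D_def using cSUP_upper[OF that bdd] .
  have Dless: "\<exists>u\<in>U. c < inner x u" if "c < D x" for x c
    using that less_cSUP_iff[OF Une bdd] unfolding D_def by blast
  have Dle: "D x \<le> c" if "\<And>u. u \<in> U \<Longrightarrow> inner x u \<le> c" for x c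
    unfolding D_def using cSUP_least[OF Une] that by blast
  have Dbound: "D x \<le> norm x / m" for x
  proof (rule Dle)
    fix u assume u: "u \<in> U"
    have "m * norm u \<le> 1" using m(2)[of u] u by (simp add: U_def)
    hence nu: "norm u \<le> 1 / m" using m(1) by (simp add: field_simps)
    have "inner x u \<le> norm x * norm u" by (rule norm_cauchy_schwarz)
    also have "\<dots> \<le> norm x * (1 / m)" using mult_left_mono[OF nu norm_ge_zero[of x]] by simp
    finally show "inner x u \<le> norm x / m" by simp
  qed
  have Dhom: "D (t *\<^sub>R y) = t * D y" if t: "t > 0" for t y
  proof -
    have "D (t *\<^sub>R y) \<le> t * D y"
    proof (rule Dle)
      fix k assume k: "k \<in> U"
      show "inner (t *\<^sub>R y) k \<le> t * D y" using Dup[OF k, of y] t by (simp add: mult_left_mono)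
    qed
    moreover have "D y \<le> D (t *\<^sub>R y) / t"
    proof (rule Dle)
      fix k assume k: "k \<in> U"
      have "t * inner y k \<le> D (t *\<^sub>R y)" using Dup[OF k, of "t *\<^sub>R y"] by simp
      thus "inner y k \<le> D (t *\<^sub>R y) / t" using t by (simp add: field_simps)
    qed
    ultimately show ?thesis using t by (simp add: field_simps)
  qed
  have Dpos: "D x > 0" if x: "x \<noteq> 0" for x
  proof -
    have hx: "h x > 0" using adm_pos[OF h x] .
    have "x /\<^sub>R h x \<in> U" using adm_hom[OF h, of "inverse (h x)" x] hx by (simp add: U_def)
    hence "inner x (x /\<^sub>R h x) \<le> D x" by (rule Dup)
    moreover have "inner x (x /\<^sub>R h x) > 0" using x hx by simp
    ultimately show ?thesis by linarith
  qed
  have D0: "D 0 = 0"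
  proof -
    have "D 0 \<le> 0" by (rule Dle) simp
    moreover have "0 \<le> D 0" using Dup[OF u1U, of 0] by simp
    ultimately show ?thesis by simp
  qed
  have Dnn: "D x \<ge> 0" for x
  proof (cases "x = 0")
    case True thus ?thesis using D0 by simp
  next
    case False thus ?thesis using Dpos[OF False] by simp
  qed
  have Dleh: "inner x u \<le> h u * D x" if u: "u \<noteq> 0" for x u
  proof -
    have hu: "h u > 0" using adm_pos[OF h u] .
    have "u /\<^sub>R h u \<in> U" using adm_hom[OF h, of "inverse (h u)" u] hu by (simp add: U_def)
    hence "inner x (u /\<^sub>R h u) \<le> D x" by (rule Dup)
    thus ?thesis using hu by (simp add: field_simps)
  qed
  have grow: "\<exists>z\<in>S. D z > D x" if S: "open S" "x \<in> S" for S x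
  proof -
    obtain \<epsilon> where eps: "\<epsilon> > 0" "ball x \<epsilon> \<subseteq> S" using openE[OF S] by blast
    show ?thesis
    proof (cases "x = 0")
      case True
      define z where "z = (\<epsilon> / 2 / norm e) *\<^sub>R e"
      have "norm z = \<epsilon> / 2" using e0 eps by (simp add: z_def)
      hence "z \<in> ball x \<epsilon>" using eps True by simp
      hence "z \<in> S" using eps by blast
      moreover have "z \<noteq> 0" using e0 eps by (simp add: z_def)
      hence "D z > 0" by (rule Dpos)
      ultimately show ?thesis using True D0 by auto
    next
      case False
      define \<delta> where "\<delta> = \<epsilon> / (2 * norm x)"
      have d: "\<delta> > 0" using eps False by (simp add: \<delta>_def)
      define z where "z = (1 + \<delta>) *\<^sub>R x"
      have "dist x z = \<delta> * norm x" using d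
        by (simp add: z_def dist_norm algebra_simps)
      also have "\<dots> = \<epsilon> / 2" using False by (simp add: \<delta>_def)
      finally have "z \<in> ball x \<epsilon>" using eps by simp
      hence zS: "z \<in> S" using eps by blast
      have Dz: "D z = (1 + \<delta>) * D x" using Dhom[of "1 + \<delta>" x] d by (simp add: z_def)
      have "D x > 0" using Dpos[OF False] .
      hence "\<delta> * D x > 0" using d by simp
      hence "D z > D x" using Dz by (simp add: distrib_right)
      thus ?thesis using zS by blast
    qed
  qed
  have Wc: "x \<in> wulff h \<longleftrightarrow> D x < 1" for x
  proof
    assume x: "x \<in> wulff h"
    obtain z where z: "z \<in> wulff h" "D z > D x" using grow[OF wulff_open[OF h] x] by blast
    have "D z \<le> 1"
    proof (rule Dle)
      fix u assume u: "u \<in> U"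
      have "inner z u < h u" using wulff_iff[OF h] z(1) U0[OF u] by blast
      thus "inner z u \<le> 1" using u by (simp add: U_def)
    qed
    thus "D x < 1" using z(2) by linarith
  next
    assume x: "D x < 1"
    show "x \<in> wulff h"
    proof (subst wulff_iff[OF h], intro allI impI)
      fix w :: 'a assume w: "w \<noteq> 0"
      have "inner x w \<le> h w * D x" using Dleh[OF w] .
      also have "\<dots> < h w" using adm_pos[OF h w] x by simp
      finally show "inner x w < h w" .
    qed
  qed
  define St where "St t = slice K t" for t
  have Sopen: "open (St t)" for t
  proof -
    have "St t = (\<lambda>x. (x, t)) -` K" by (auto simp: St_def slice_def)
    moreover have "open K" using wulff_open[OF f] K_def by simp
    hence "open ((\<lambda>x. (x, t)) -` K)" by (rule continuous_open_vimage) (intro continuous_intros)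
    ultimately show ?thesis by simp
  qed
  have M: "y \<in> St t" if z: "z \<in> St t" and Dyz: "D y < D z" for y z t
  proof -
    have zK: "(z, t) \<in> K" using z by (simp add: St_def slice_def)
    have "(y, t) \<in> wulff f"
    proof (subst wulff_iff[OF f], intro allI impI)
      fix w :: "'a \<times> real" assume w: "w \<noteq> 0"
      obtain v s where ws: "w = (v, s)" by (cases w)
      show "inner (y, t) w < f w"
      proof (cases "v = 0")
        case True
        have "inner (z, t) w < f w" using zK[unfolded K_def] wulff_iff[OF f] w by blast
        thus ?thesis using ws True by simp
      next
        case False
        define c where "c = h v"
        have c: "c > 0" using adm_pos[OF h False] by (simp add: c_def)
        have "inner y v \<le> c * D y" using Dleh[OF False] by (simp add: c_def)
        also have "\<dots> < c * D z" using Dyz c by simp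
        finally have "inner y v / c < D z" using c by (simp add: field_simps)
        then obtain u where u: "u \<in> U" "inner y v / c < inner z u" using Dless by blast
        have yv: "inner y v < c * inner z u" using u(2) c by (simp add: field_simps)
        have hcu: "h (c *\<^sub>R u) = c" using adm_hom[OF h c, of u] u(1) by (simp add: U_def)
        have cu0: "(c *\<^sub>R u, s) \<noteq> 0" using U0[OF u(1)] c by (simp add: zero_prod_def)
        have "inner (z, t) (c *\<^sub>R u, s) < f (c *\<^sub>R u, s)" using zK[unfolded K_def] wulff_iff[OF f] cu0 by blast
        also have "\<dots> = f (v, s)" using fe hcu by (simp add: c_def)
        finally have "c * inner z u + t * s < f (v, s)" by simp
        thus ?thesis using yv ws by simp
      qed
    qed
    thus ?thesis by (simp add: St_def slice_def K_def)
  qed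
  obtain B where B: "B > 0" "\<And>y. y \<in> K \<Longrightarrow> norm y \<le> B"
    using wulff_bounded[OF f] K_def by blast
  have Sbdd: "bdd_above (D ` St t)" for t
  proof (rule bdd_aboveI2)
    fix z assume "z \<in> St t"
    hence "(z, t) \<in> K" by (simp add: St_def slice_def)
    hence "norm (z, t) \<le> B" using B by blast
    hence "norm z \<le> B" by (smt (verit) norm_fst_le fst_conv)
    hence "norm z / m \<le> B / m" using m(1) by (simp add: divide_right_mono)
    thus "D z \<le> B / m" using Dbound[of z] by linarith
  qed
  define \<alpha> where "\<alpha> t = (if St t = {} then 0 else SUP z\<in>St t. D z)" for t
  have A: "St t = {y. D y < \<alpha> t}" if ne: "St t \<noteq> {}" for t
  proof
    show "St t \<subseteq> {y. D y < \<alpha> t}"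
    proof
      fix y assume y: "y \<in> St t"
      obtain z where z: "z \<in> St t" "D z > D y" using grow[OF Sopen y] by blast
      have "D z \<le> \<alpha> t" using cSUP_upper[OF z(1) Sbdd] ne by (simp add: \<alpha>_def)
      thus "y \<in> {y. D y < \<alpha> t}" using z(2) by simp
    qed
  next
    show "{y. D y < \<alpha> t} \<subseteq> St t"
    proof
      fix y assume "y \<in> {y. D y < \<alpha> t}"
      hence "D y < (SUP z\<in>St t. D z)" using ne by (simp add: \<alpha>_def)
      then obtain z where "z \<in> St t" "D y < D z" using less_cSUP_iff[OF ne Sbdd] by blast
      thus "y \<in> St t" using M by blast
    qed
  qed
  have apos: "\<alpha> t > 0" if ne: "St t \<noteq> {}" for t
  proof -
    obtain x where x: "x \<in> St t" using ne by blast
    obtain z where z: "z \<in> St t" "D z > D x" using grow[OF Sopen x] by blast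
    have "D z \<le> \<alpha> t" using cSUP_upper[OF z(1) Sbdd] ne by (simp add: \<alpha>_def)
    thus ?thesis using z(2) Dnn[of x] by linarith
  qed
  have scale: "{y. D y < a} = (\<lambda>y. a *\<^sub>R y) ` wulff h" if a: "a > 0" for a
  proof
    show "{y. D y < a} \<subseteq> (\<lambda>y. a *\<^sub>R y) ` wulff h"
    proof
      fix y assume "y \<in> {y. D y < a}"
      hence Dy: "D y < a" by simp
      have "D (inverse a *\<^sub>R y) = D y / a" using Dhom[of "inverse a" y] a
        by (simp add: divide_inverse mult.commute)
      hence "D (inverse a *\<^sub>R y) < 1" using Dy a by simp
      hence "inverse a *\<^sub>R y \<in> wulff h" using Wc by blast
      moreover have "y = a *\<^sub>R (inverse a *\<^sub>R y)" using a by simp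
      ultimately show "y \<in> (\<lambda>y. a *\<^sub>R y) ` wulff h" by blast
    qed
  next
    show "(\<lambda>y. a *\<^sub>R y) ` wulff h \<subseteq> {y. D y < a}"
    proof
      fix x assume "x \<in> (\<lambda>y. a *\<^sub>R y) ` wulff h"
      then obtain y where y: "y \<in> wulff h" "x = a *\<^sub>R y" by blast
      have "D y < 1" using Wc y(1) by blast
      thus "x \<in> {y. D y < a}" using Dhom[OF a, of y] y(2) a by simp
    qed
  qed
  have pos_iff: "\<alpha> t > 0 \<longleftrightarrow> St t \<noteq> {}" for t
    using apos by (auto simp: \<alpha>_def)
  have conc: "concave_on {t. \<alpha> t > 0} \<alpha>"
    unfolding concave_on_iff
  proof (intro conjI ballI allI impI)
    show "convex {t. \<alpha> t > 0}"
      unfolding convex_def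
    proof (intro ballI allI impI)
      fix t1 t2 u v :: real assume t: "t1 \<in> {t. \<alpha> t > 0}" "t2 \<in> {t. \<alpha> t > 0}"
        and uv: "0 \<le> u" "0 \<le> v" "u + v = 1"
      obtain z1 where z1: "z1 \<in> St t1" using t(1) pos_iff by auto
      obtain z2 where z2: "z2 \<in> St t2" using t(2) pos_iff by auto
      have "u *\<^sub>R (z1, t1) + v *\<^sub>R (z2, t2) \<in> K"
        using convexD[OF wulff_convex[OF f], of "(z1, t1)" "(z2, t2)" u v] z1 z2 uv
        by (simp add: St_def slice_def K_def)
      hence "u *\<^sub>R z1 + v *\<^sub>R z2 \<in> St (u *\<^sub>R t1 + v *\<^sub>R t2)" by (simp add: St_def slice_def)
      thus "u *\<^sub>R t1 + v *\<^sub>R t2 \<in> {t. \<alpha> t > 0}" using pos_iff by blast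
    qed
  next
    fix t1 t2 u v :: real assume t: "t1 \<in> {t. \<alpha> t > 0}" "t2 \<in> {t. \<alpha> t > 0}"
      and uv: "0 \<le> u" "0 \<le> v" "u + v = 1"
    define T where "T = u *\<^sub>R t1 + v *\<^sub>R t2"
    have a1: "\<alpha> t1 > 0" and a2: "\<alpha> t2 > 0" using t by auto
    have Apos: "u * \<alpha> t1 + v * \<alpha> t2 > 0"
      using a1 a2 uv by (smt (verit) mult_nonneg_nonneg mult_pos_pos)
    have u1ne: "u1 \<noteq> 0" using U0[OF u1U] .
    define p where "p = u1 /\<^sub>R D u1"
    have Dp: "D p = 1" using Dhom[of "inverse (D u1)" u1] Dpos[OF u1ne] by (simp add: p_def)
    show "u * \<alpha> t1 + v * \<alpha> t2 \<le> \<alpha> T"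
    proof (rule field_le_mult_one_interval)
      fix s :: real assume s: "0 < s" "s < 1"
      have "D ((s * \<alpha> t1) *\<^sub>R p) = s * \<alpha> t1" using Dhom[of "s * \<alpha> t1" p] s a1 Dp by simp
      hence z1: "(s * \<alpha> t1) *\<^sub>R p \<in> St t1" using A[of t1] a1 pos_iff s by simp
      have "D ((s * \<alpha> t2) *\<^sub>R p) = s * \<alpha> t2" using Dhom[of "s * \<alpha> t2" p] s a2 Dp by simp
      hence z2: "(s * \<alpha> t2) *\<^sub>R p \<in> St t2" using A[of t2] a2 pos_iff s by simp
      have "u *\<^sub>R ((s * \<alpha> t1) *\<^sub>R p, t1) + v *\<^sub>R ((s * \<alpha> t2) *\<^sub>R p, t2) \<in> K"
        using convexD[OF wulff_convex[OF f], of "((s * \<alpha> t1) *\<^sub>R p, t1)" "((s * \<alpha> t2) *\<^sub>R p, t2)" u v]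
          z1 z2 uv by (simp add: St_def slice_def K_def)
      moreover have "u *\<^sub>R ((s * \<alpha> t1) *\<^sub>R p, t1) + v *\<^sub>R ((s * \<alpha> t2) *\<^sub>R p, t2)
          = ((s * (u * \<alpha> t1 + v * \<alpha> t2)) *\<^sub>R p, T)"
        by (simp add: T_def algebra_simps)
      ultimately have zT: "(s * (u * \<alpha> t1 + v * \<alpha> t2)) *\<^sub>R p \<in> St T" by (simp add: St_def slice_def)
      hence neT: "St T \<noteq> {}" by blast
      have "D ((s * (u * \<alpha> t1 + v * \<alpha> t2)) *\<^sub>R p) = s * (u * \<alpha> t1 + v * \<alpha> t2)"
        using Dhom[of "s * (u * \<alpha> t1 + v * \<alpha> t2)" p] s Apos Dp by simp
      hence "s * (u * \<alpha> t1 + v * \<alpha> t2) < \<alpha> T" using zT A[OF neT] by auto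
      thus "s * (u * \<alpha> t1 + v * \<alpha> t2) \<le> \<alpha> T" by simp
    qed
  qed
  show ?thesis
  proof (intro exI[of _ \<alpha>] conjI allI impI conc)
    fix t show "0 \<le> \<alpha> t" using apos by (cases "St t = {}") (auto simp: \<alpha>_def intro: less_imp_le)
  next
    fix t assume "\<alpha> t = 0"
    thus "slice (wulff f) t = {}" using pos_iff[of t] by (auto simp: St_def K_def)
  next
    fix t assume at: "\<alpha> t \<noteq> 0"
    hence ne: "St t \<noteq> {}" by (auto simp: \<alpha>_def)
    hence "St t = (\<lambda>y. \<alpha> t *\<^sub>R y) ` wulff h" using A scale apos by simp
    thus "slice (wulff f) t = (\<lambda>y. \<alpha> t *\<^sub>R y) ` wulff h" by (simp add: St_def K_def)
  qed
qed


theorem mainTheorem1: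
  fixes dummy :: "'a::euclidean_space"
  shows
  "(\<forall>(f :: 'a \<times> real \<Rightarrow> real) h \<phi>. admissible f \<and> sym_repr f h \<phi> \<longrightarrow>
      (\<exists>\<alpha> :: real \<Rightarrow> real. (\<forall>t. 0 \<le> \<alpha> t) \<and> concave_on {t. \<alpha> t > 0} \<alpha> \<and>
         (\<forall>t. \<alpha> t = 0 \<longrightarrow> slice (wulff f) t = {}) \<and>
         (\<forall>t. \<alpha> t \<noteq> 0 \<longrightarrow> slice (wulff f) t = (\<lambda>y. \<alpha> t *\<^sub>R y) ` wulff h)))
   \<and>
   (\<forall>(f :: 'a \<times> real \<Rightarrow> real) (Kh :: 'a set) (\<alpha> :: real \<Rightarrow> real).
      lsc_on UNIV f \<and> admissible f \<and> open Kh \<and> convex Kh \<and>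
      (\<forall>t. 0 \<le> \<alpha> t) \<and> concave_on {t. \<alpha> t > 0} \<alpha> \<and>
      (\<forall>t. \<alpha> t = 0 \<longrightarrow> slice (wulff f) t = {}) \<and>
      (\<forall>t. \<alpha> t \<noteq> 0 \<longrightarrow> slice (wulff f) t = (\<lambda>y. \<alpha> t *\<^sub>R y) ` Kh)
      \<longrightarrow> symmetrizable f)"
proof (intro conjI allI impI)
  fix f :: "'a \<times> real \<Rightarrow> real" and h \<phi>
  assume "admissible f \<and> sym_repr f h \<phi>"
  thus "\<exists>\<alpha> :: real \<Rightarrow> real. (\<forall>t. 0 \<le> \<alpha> t) \<and> concave_on {t. \<alpha> t > 0} \<alpha> \<and>
         (\<forall>t. \<alpha> t = 0 \<longrightarrow> slice (wulff f) t = {}) \<and>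
         (\<forall>t. \<alpha> t \<noteq> 0 \<longrightarrow> slice (wulff f) t = (\<lambda>y. \<alpha> t *\<^sub>R y) ` wulff h)"
    using part1 by blast
next
  fix f :: "'a \<times> real \<Rightarrow> real" and Kh :: "'a set" and \<alpha> :: "real \<Rightarrow> real"
  assume H: "lsc_on UNIV f \<and> admissible f \<and> open Kh \<and> convex Kh \<and>
      (\<forall>t. 0 \<le> \<alpha> t) \<and> concave_on {t. \<alpha> t > 0} \<alpha> \<and>
      (\<forall>t. \<alpha> t = 0 \<longrightarrow> slice (wulff f) t = {}) \<and>
      (\<forall>t. \<alpha> t \<noteq> 0 \<longrightarrow> slice (wulff f) t = (\<lambda>y. \<alpha> t *\<^sub>R y) ` Kh)"
  show "symmetrizable f"
    using part2[of f Kh \<alpha>] H by blast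
qed

end
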